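(* Let $n$ be a positive integer divisible by $q-1$ with $l(n)\ge3(q-1)$, let $\beta\in\mathcal{M}_2(n)$ be an ordered tuple that is maximal for $|\cdot|_1$ (among all of $\mathcal{M}_2(n)$), and let $e$ be the number of even entries of $\beta$. (i) If $e=q-1$, then $|\beta|_1=|\beta|_2$ and $\beta$ is maximal for $|\cdot|_2$. (ii) If $0\le e<q-1$, let $\mu$ be obtained from $\beta$ by replacing every entry $\beta_j$ with $1\le j\le q-1$ and $\beta_j\le\beta_{q-1}$ by $\beta_{q-1}-1$; then $\mu\in\mathcal{M}_2(n)$ is ordered and maximal for $|\cdot|_2$. (iii) If $q-1<e\le2(q-1)$, let $\mu$ be obtained from $\beta$ by replacing every entry $\beta_j$ with $q\le j\le2(q-1)$ and $\beta_j\le\beta_q$ by $\beta_q-1$; then $\mu\in\mathcal{M}_2(n)$ is ordered and maximal for $|\cdot|_2$.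
   Context: For $n=\sum_in_iq^i$ in base $q$, $l(n)=\sum_in_i$. For $\beta\in\mathbb{N}^{2(q-1)}$, $|\beta|_1=\sum_iq^{\beta_i}$; $\mathcal{M}_2(n)=\{\beta\in\mathbb{N}^{2(q-1)}:|\beta|_1\le n\}$; $\mu$ is maximal for $|\cdot|_1$ if $|\mu|_1\ge|\beta|_1$ for all $\beta\in\mathcal{M}_2(n)$. A tuple $\beta\in\mathbb{N}^{2(q-1)}$ is ordered if there is $e$ with $0\le e\le2(q-1)$ such that $\beta_1\ge\cdots\ge\beta_e$ are all even ($0$ counts as even) and $\beta_{e+1}\le\cdots\le\beta_{2(q-1)}$ are all odd (so $e$ is the number of even entries); for such $\beta$, $|\beta|_2=\sum_{i=1}^{\min\{e,q-1\}}q^{\beta_i}+\sum_{i=\max\{q,e+1\}}^{2(q-1)}q^{\beta_i}$. An ordered $\mu\in\mathcal{M}_2(n)$ is maximal for $|\cdot|_2$ if $|\mu|_2\ge|\gamma|_2$ for every ordered $\gamma\in\mathcal{M}_2(n)$. *)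

theory Defs
  imports Main
begin

text \<open>Tuples in N^{2(q-1)} are represented as functions nat => nat, using only the
  indices 1..2(q-1) (1-based, as in the paper); values at other indices are ignored
  by every definition below.\<close>

function digit_sum :: "nat \<Rightarrow> nat \<Rightarrow> nat" where
  "digit_sum q n = (if q < 2 \<or> n = 0 then 0 else n mod q + digit_sum q (n div q))"
  by auto
termination
  by (relation "measure snd") auto

definition norm1 :: "nat \<Rightarrow> (nat \<Rightarrow> nat) \<Rightarrow> nat" where
  "norm1 q \<beta> = (\<Sum>i = 1..2*(q-1). q ^ \<beta> i)"

definition inM2 :: "nat \<Rightarrow> nat \<Rightarrow> (nat \<Rightarrow> nat) \<Rightarrow> bool" where
  "inM2 q n \<beta> \<longleftrightarrow> norm1 q \<beta> \<le> n"

definition maximal1 :: "nat \<Rightarrow> nat \<Rightarrow> (nat \<Rightarrow> nat) \<Rightarrow> bool" where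
  "maximal1 q n \<mu> \<longleftrightarrow> inM2 q n \<mu> \<and> (\<forall>\<gamma>. inM2 q n \<gamma> \<longrightarrow> norm1 q \<gamma> \<le> norm1 q \<mu>)"

definition num_even :: "nat \<Rightarrow> (nat \<Rightarrow> nat) \<Rightarrow> nat" where
  "num_even q \<beta> = card {i \<in> {1..2*(q-1)}. even (\<beta> i)}"

definition ordered_with :: "nat \<Rightarrow> (nat \<Rightarrow> nat) \<Rightarrow> nat \<Rightarrow> bool" where
  "ordered_with q \<beta> e \<longleftrightarrow> e \<le> 2*(q-1)
     \<and> (\<forall>i \<in> {1..e}. even (\<beta> i))
     \<and> (\<forall>i j. 1 \<le> i \<and> i \<le> j \<and> j \<le> e \<longrightarrow> \<beta> j \<le> \<beta> i)
     \<and> (\<forall>i \<in> {e+1..2*(q-1)}. odd (\<beta> i))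
     \<and> (\<forall>i j. e+1 \<le> i \<and> i \<le> j \<and> j \<le> 2*(q-1) \<longrightarrow> \<beta> i \<le> \<beta> j)"

definition ordered :: "nat \<Rightarrow> (nat \<Rightarrow> nat) \<Rightarrow> bool" where
  "ordered q \<beta> \<longleftrightarrow> (\<exists>e. ordered_with q \<beta> e)"

definition norm2 :: "nat \<Rightarrow> (nat \<Rightarrow> nat) \<Rightarrow> nat" where
  "norm2 q \<beta> = (let e = num_even q \<beta> in
      (\<Sum>i = 1..min e (q-1). q ^ \<beta> i) + (\<Sum>i = max q (e+1)..2*(q-1). q ^ \<beta> i))"

definition maximal2 :: "nat \<Rightarrow> nat \<Rightarrow> (nat \<Rightarrow> nat) \<Rightarrow> bool" where
  "maximal2 q n \<mu> \<longleftrightarrow> ordered q \<mu> \<and> inM2 q n \<mu>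
     \<and> (\<forall>\<gamma>. ordered q \<gamma> \<and> inM2 q n \<gamma> \<longrightarrow> norm2 q \<gamma> \<le> norm2 q \<mu>)"

end

theory Submission
  imports Defs
begin


declare digit_sum.simps[simp del]

lemma ds_0: "digit_sum q 0 = 0"
  by (subst digit_sum.simps) simp

lemma ds_eq: "q \<ge> 2 \<Longrightarrow> digit_sum q n = n mod q + digit_sum q (n div q)"
  by (cases "n = 0") (simp add: ds_0, subst digit_sum.simps, simp)

lemma ds_suc: assumes "q \<ge> 2" shows "digit_sum q (Suc x) \<le> digit_sum q x + 1"
proof (induction x rule: less_induct)
  case (less x)
  show ?case
  proof (cases "Suc (x mod q) = q")
    case False
    then show ?thesis using ds_eq[OF assms, of "Suc x"] ds_eq[OF assms, of x]
      by (simp add: mod_Suc div_Suc)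
  next
    case True
    then have "x > 0" using assms by (cases x) auto
    then have "x div q < x" using assms by simp
    from less[OF this] have "digit_sum q (Suc (x div q)) \<le> digit_sum q (x div q) + 1" .
    then show ?thesis using True ds_eq[OF assms, of "Suc x"] ds_eq[OF assms, of x]
      by (simp add: mod_Suc div_Suc)
  qed
qed

lemma ds_pow: assumes "q \<ge> 2" shows "digit_sum q (x + q ^ k) \<le> digit_sum q x + 1"
proof (induction k arbitrary: x)
  case 0
  then show ?case using ds_suc[OF assms] by simp
next
  case (Suc k)
  have "(x + q ^ Suc k) mod q = x mod q" by simp
  moreover have "(x + q ^ Suc k) div q = x div q + q ^ k" using assms by simp
  ultimately show ?case using Suc[of "x div q"] ds_eq[OF assms, of "x + q ^ Suc k"] ds_eq[OF assms, of x]
    by simp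
qed

lemma ds_sum: assumes "q \<ge> 2" "finite I" shows "digit_sum q (\<Sum>i\<in>I. q ^ f i) \<le> card I"
  using assms(2)
proof (induction I rule: finite_induct)
  case empty
  then show ?case by (simp add: ds_0)
next
  case (insert x F)
  then show ?case using ds_pow[OF assms(1), of "\<Sum>i\<in>F. q ^ f i" "f x"] by (simp add: add.commute)
qed


lemma pow_mod_pred: fixes q :: nat assumes "q \<ge> 2" shows "q ^ k mod (q - 1) = 1 mod (q - 1)"
proof -
  have q: "q = 1 + (q - 1)" using assms by simp
  have "q mod (q - 1) = 1 mod (q - 1)"
    by (subst q) (rule mod_add_self2)
  have "q ^ k mod (q - 1) = (q mod (q - 1)) ^ k mod (q - 1)" by (rule power_mod[symmetric])
  also have "\<dots> = (1 mod (q-1)) ^ k mod (q - 1)" using \<open>q mod (q - 1) = 1 mod (q - 1)\<close> by simp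
  also have "\<dots> = 1 ^ k mod (q - 1)" by (rule power_mod)
  finally show ?thesis by simp
qed

lemma sum_pow_mod: fixes q :: nat assumes "q \<ge> 2" shows "(\<Sum>i\<in>I. q ^ f i) mod (q - 1) = card I mod (q - 1)"
proof -
  have "(\<Sum>i\<in>I. q ^ f i) mod (q - 1) = (\<Sum>i\<in>I. q ^ f i mod (q - 1)) mod (q - 1)"
    by (rule mod_sum_eq[symmetric])
  also have "\<dots> = (\<Sum>i\<in>I. 1 mod (q - 1)) mod (q - 1)" using pow_mod_pred[OF assms] by simp
  also have "\<dots> = (\<Sum>i\<in>I. 1) mod (q - 1)" by (rule mod_sum_eq)
  finally show ?thesis by simp
qed

lemma exp_lt: "q \<ge> 2 \<Longrightarrow> x < (q::nat) ^ x"
  by (simp add: power_gt_expt)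



lemma sum_split_P: "finite J \<Longrightarrow> sum f J = sum f {j\<in>J. P j} + sum f {j\<in>J. \<not> P j}"
proof -
  assume f: "finite J"
  have "J = {j\<in>J. P j} \<union> {j\<in>J. \<not> P j}" by auto
  then have "sum f J = sum f ({j\<in>J. P j} \<union> {j\<in>J. \<not> P j})" by simp
  also have "\<dots> = sum f {j\<in>J. P j} + sum f {j\<in>J. \<not> P j}"
    by (rule sum.union_disjoint) (use f in auto)
  finally show ?thesis .
qed

lemma sum_const_level: "(\<Sum>j\<in>{j\<in>J. g j = t}. (q::nat) ^ g j) = card {j\<in>J. g j = t} * q ^ t"
proof -
  have "(\<Sum>j\<in>{j\<in>J. g j = t}. q ^ g j) = (\<Sum>j\<in>{j\<in>J. g j = t}. q ^ t)" by (rule sum.cong) auto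
  then show ?thesis by simp
qed

lemma low_lt:
  fixes q :: nat
  assumes q: "q \<ge> 2" and fin: "finite J" and mult: "\<forall>s. card {j\<in>J. g j = s} \<le> q - 1"
  shows "(\<Sum>j\<in>{j\<in>J. g j < t}. q ^ g j) < q ^ t"
proof (induction t)
  case 0
  then show ?case by simp
next
  case (Suc t)
  have "(\<Sum>j\<in>{j\<in>J. g j < Suc t}. q ^ g j)
      = (\<Sum>j\<in>{j\<in>{j\<in>J. g j < Suc t}. g j < t}. q ^ g j) + (\<Sum>j\<in>{j\<in>{j\<in>J. g j < Suc t}. \<not> g j < t}. q ^ g j)"
    by (rule sum_split_P) (use fin in simp)
  also have "{j\<in>{j\<in>J. g j < Suc t}. g j < t} = {j\<in>J. g j < t}" by auto
  also have "{j\<in>{j\<in>J. g j < Suc t}. \<not> g j < t} = {j\<in>J. g j = t}" by auto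
  also have "(\<Sum>j\<in>{j\<in>J. g j = t}. q ^ g j) = card {j\<in>J. g j = t} * q ^ t" by (rule sum_const_level)
  also have "card {j\<in>J. g j = t} * q ^ t \<le> (q - 1) * q ^ t" using mult by (simp add: mult_le_mono1)
  finally have "(\<Sum>j\<in>{j\<in>J. g j < Suc t}. q ^ g j) < q ^ t + (q - 1) * q ^ t" using Suc by linarith
  also have "q ^ t + (q - 1) * q ^ t = q ^ Suc t"
  proof -
    have "q = Suc (q - 1)" using q by simp
    then have "q ^ Suc t = Suc (q - 1) * q ^ t" by (metis power_Suc)
    then show ?thesis by simp
  qed
  finally show ?case .
qed

lemma digit_count:
  fixes q :: nat
  assumes q: "q \<ge> 2" and fin: "finite J" and mult: "\<forall>s. card {j\<in>J. g j = s} \<le> q - 1"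
  shows "(\<Sum>j\<in>J. q ^ g j) div q ^ s mod q = card {j\<in>J. g j = s}"
proof -
  define L where "L = (\<Sum>j\<in>{j\<in>J. g j < s}. q ^ g j)"
  define C where "C = card {j\<in>J. g j = s}"
  define H where "H = (\<Sum>j\<in>{j\<in>J. s < g j}. q ^ g j)"
  have "(\<Sum>j\<in>J. q ^ g j) = L + (\<Sum>j\<in>{j\<in>J. \<not> g j < s}. q ^ g j)"
    unfolding L_def by (rule sum_split_P[OF fin])
  also have "(\<Sum>j\<in>{j\<in>J. \<not> g j < s}. q ^ g j) = 
     (\<Sum>j\<in>{j\<in>{j\<in>J. \<not> g j < s}. g j = s}. q ^ g j) + (\<Sum>j\<in>{j\<in>{j\<in>J. \<not> g j < s}. \<not> g j = s}. q ^ g j)"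
    by (rule sum_split_P) (use fin in simp)
  also have "{j\<in>{j\<in>J. \<not> g j < s}. g j = s} = {j\<in>J. g j = s}" by auto
  also have "{j\<in>{j\<in>J. \<not> g j < s}. \<not> g j = s} = {j\<in>J. s < g j}" by auto
  also have "(\<Sum>j\<in>{j\<in>J. g j = s}. q ^ g j) = C * q ^ s" unfolding C_def by (rule sum_const_level)
  finally have eq: "(\<Sum>j\<in>J. q ^ g j) = L + C * q ^ s + H" unfolding H_def by simp
  have "q ^ Suc s dvd H" unfolding H_def
    by (rule dvd_sum) (metis (mono_tags, lifting) le_imp_power_dvd Suc_leI mem_Collect_eq)
  then obtain h where h: "H = q ^ Suc s * h" by blast
  have Llt: "L < q ^ s" unfolding L_def by (rule low_lt[OF q fin mult])
  have Clt: "C < q" unfolding C_def using mult[rule_format, of s] q by linarith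
  have "(\<Sum>j\<in>J. q ^ g j) = L + q ^ s * (C + q * h)" using eq h by (simp add: algebra_simps)
  then have "(\<Sum>j\<in>J. q ^ g j) div q ^ s = C + q * h" using Llt q by simp
  then show ?thesis using Clt by (simp add: C_def)
qed

lemma card_by_levels:
  fixes g :: "'a \<Rightarrow> nat"
  assumes fin: "finite J" and bd: "\<forall>j\<in>J. g j \<le> N"
  shows "card {j\<in>J. Q (g j)} = (\<Sum>s\<in>{s. s \<le> N \<and> Q s}. card {j\<in>J. g j = s})"
proof -
  have "{j\<in>J. Q (g j)} = (\<Union>s\<in>{s. s \<le> N \<and> Q s}. {j\<in>J. g j = s})" using bd by auto
  then have "card {j\<in>J. Q (g j)} = card (\<Union>s\<in>{s. s \<le> N \<and> Q s}. {j\<in>J. g j = s})" by simp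
  also have "\<dots> = (\<Sum>s\<in>{s. s \<le> N \<and> Q s}. card {j\<in>J. g j = s})"
  proof (rule card_UN_disjoint)
    show "finite {s. s \<le> N \<and> Q s}" by (rule finite_subset[of _ "{..N}"]) auto
  qed (use fin in auto)
  finally show ?thesis .
qed



lemma dvd_gap: "(P::nat) dvd a \<Longrightarrow> P dvd b \<Longrightarrow> b < a \<Longrightarrow> b + P \<le> a"
proof -
  assume "P dvd a" "P dvd b" "b < a"
  then obtain x y where "a = P * x" "b = P * y" by (auto elim!: dvdE)
  with \<open>b < a\<close> have "y < x" by (metis mult_less_cancel1)
  then have "P * y + P \<le> P * x" by (metis Suc_leI mult_Suc_right mult_le_mono2 add.commute)
  then show ?thesis using \<open>a = P * x\<close> \<open>b = P * y\<close> by simp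
qed

lemma key:
  fixes q m p c r :: nat and \<beta> \<gamma> :: "nat \<Rightarrow> nat" and I J :: "nat set"
  assumes qm: "q = m + 1" "m \<ge> 1" and finI: "finite I" and finJ: "finite J"
    and multb: "\<forall>s. card {i\<in>I. \<beta> i = s} \<le> m"
    and evJ: "card {j\<in>J. even (\<gamma> j)} \<le> m" and odJ: "card {j\<in>J. odd (\<gamma> j)} \<le> m"
    and le: "(\<Sum>j\<in>J. q ^ \<gamma> j) \<le> (\<Sum>i\<in>I. q ^ \<beta> i)"
    and p1: "p \<ge> 1"
    and hc: "card {i\<in>I. p < \<beta> i \<and> (even (\<beta> i) = even p)} + c = m"
    and hr: "r + card {i\<in>I. p < \<beta> i \<and> (even (\<beta> i) \<noteq> even p)} = m"
  shows "(\<Sum>j\<in>J. q ^ \<gamma> j) \<le> (\<Sum>i\<in>{i\<in>I. p < \<beta> i}. q ^ \<beta> i) + c * q ^ p + r * q ^ (p - 1)"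
proof -
  have q2: "q \<ge> 2" using qm by simp
  have mq: "m = q - 1" using qm by simp
  have multg: "\<forall>s. card {j\<in>J. \<gamma> j = s} \<le> m"
  proof
    fix s
    show "card {j\<in>J. \<gamma> j = s} \<le> m"
    proof (cases "even s")
      case True
      then have "card {j\<in>J. \<gamma> j = s} \<le> card {j\<in>J. even (\<gamma> j)}" by (intro card_mono) (use finJ in auto)
      then show ?thesis using evJ by linarith
    next
      case False
      then have "card {j\<in>J. \<gamma> j = s} \<le> card {j\<in>J. odd (\<gamma> j)}" by (intro card_mono) (use finJ in auto)
      then show ?thesis using odJ by linarith
    qed
  qed
  have sameJ: "card {j\<in>J. even (\<gamma> j) = even p} \<le> m"
    using evJ odJ by (cases "even p") auto
  have otherJ: "card {j\<in>J. even (\<gamma> j) \<noteq> even p} \<le> m"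
    using evJ odJ by (cases "even p") auto
  define I' where "I' = {i\<in>I. p < \<beta> i}"
  define J' where "J' = {j\<in>J. p < \<gamma> j}"
  define a where "a = (\<Sum>i\<in>I'. q ^ \<beta> i)"
  define b where "b = (\<Sum>j\<in>J'. q ^ \<gamma> j)"
  define M where "M = (\<Sum>i\<in>I. q ^ \<beta> i)"
  define \<alpha> where "\<alpha> = (\<Sum>j\<in>J. q ^ \<gamma> j)"
  define P where "P = q ^ Suc p"
  have multb': "\<forall>s. card {i\<in>I. \<beta> i = s} \<le> q - 1" using multb mq by simp
  have multg': "\<forall>s. card {j\<in>J. \<gamma> j = s} \<le> q - 1" using multg mq by simp
  have M_split: "M = a + (\<Sum>i\<in>{i\<in>I. \<beta> i < Suc p}. q ^ \<beta> i)"
  proof -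
    have "M = a + (\<Sum>i\<in>{i\<in>I. \<not> p < \<beta> i}. q ^ \<beta> i)"
      unfolding M_def a_def I'_def by (rule sum_split_P[OF finI])
    also have "{i\<in>I. \<not> p < \<beta> i} = {i\<in>I. \<beta> i < Suc p}" by auto
    finally show ?thesis .
  qed
  have MLt: "(\<Sum>i\<in>{i\<in>I. \<beta> i < Suc p}. q ^ \<beta> i) < P"
    unfolding P_def by (rule low_lt[OF q2 finI multb'])
  have a_split: "\<alpha> = b + (\<Sum>j\<in>{j\<in>J. \<gamma> j < Suc p}. q ^ \<gamma> j)"
  proof -
    have "\<alpha> = b + (\<Sum>j\<in>{j\<in>J. \<not> p < \<gamma> j}. q ^ \<gamma> j)"
      unfolding \<alpha>_def b_def J'_def by (rule sum_split_P[OF finJ])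
    also have "{j\<in>J. \<not> p < \<gamma> j} = {j\<in>J. \<gamma> j < Suc p}" by auto
    finally show ?thesis .
  qed
  have aL: "(\<Sum>j\<in>{j\<in>J. \<gamma> j < Suc p}. q ^ \<gamma> j) < P"
    unfolding P_def by (rule low_lt[OF q2 finJ multg'])
  have Pa: "P dvd a" unfolding a_def I'_def P_def
    by (rule dvd_sum) (metis (mono_tags, lifting) le_imp_power_dvd Suc_leI mem_Collect_eq)
  have Pb: "P dvd b" unfolding b_def J'_def P_def
    by (rule dvd_sum) (metis (mono_tags, lifting) le_imp_power_dvd Suc_leI mem_Collect_eq)
  have aM: "\<alpha> \<le> M" using le unfolding \<alpha>_def M_def .
  define RHS where "RHS = a + c * q ^ p + r * q ^ (p - 1)"
  have goal: "\<alpha> \<le> RHS"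
  proof (cases "b < a")
    case True
    have "b + P \<le> a" by (rule dvd_gap[OF Pa Pb True])
    then show ?thesis using a_split aL unfolding RHS_def by linarith
  next
    case False
    show ?thesis
    proof (cases "a < b")
      case True
      have "a + P \<le> b" by (rule dvd_gap[OF Pb Pa True])
      then have False using M_split MLt a_split aM by linarith
      then show ?thesis ..
    next
      case False
      with \<open>\<not> b < a\<close> have ab: "a = b" by simp
      have finI': "finite I'" "finite J'" unfolding I'_def J'_def using finI finJ by auto
      have multI': "\<forall>s. card {i\<in>I'. \<beta> i = s} \<le> q - 1"
      proof
        fix s
        have "card {i\<in>I'. \<beta> i = s} \<le> card {i\<in>I. \<beta> i = s}"
          by (intro card_mono) (use finI in \<open>auto simp: I'_def\<close>)
        then show "card {i\<in>I'. \<beta> i = s} \<le> q - 1" using multb' by (meson le_trans)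
      qed
      have multJ': "\<forall>s. card {j\<in>J'. \<gamma> j = s} \<le> q - 1"
      proof
        fix s
        have "card {j\<in>J'. \<gamma> j = s} \<le> card {j\<in>J. \<gamma> j = s}"
          by (intro card_mono) (use finJ in \<open>auto simp: J'_def\<close>)
        then show "card {j\<in>J'. \<gamma> j = s} \<le> q - 1" using multg' by (meson le_trans)
      qed
      have cnt: "card {j\<in>J'. \<gamma> j = s} = card {i\<in>I'. \<beta> i = s}" for s
        using digit_count[OF q2 finI'(2) multJ', of s] digit_count[OF q2 finI'(1) multI', of s] ab
        unfolding a_def b_def by simp
      have bdJ: "\<forall>j\<in>J'. \<gamma> j \<le> M"
      proof
        fix j assume "j \<in> J'"
        then have "j \<in> J" by (simp add: J'_def)
        have "\<gamma> j < q ^ \<gamma> j" by (rule exp_lt[OF q2])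
        also have "q ^ \<gamma> j \<le> \<alpha>" unfolding \<alpha>_def by (rule member_le_sum) (use \<open>j \<in> J\<close> finJ in auto)
        finally show "\<gamma> j \<le> M" using aM by simp
      qed
      have bdI: "\<forall>i\<in>I'. \<beta> i \<le> M"
      proof
        fix i assume "i \<in> I'"
        then have "i \<in> I" by (simp add: I'_def)
        have "\<beta> i < q ^ \<beta> i" by (rule exp_lt[OF q2])
        also have "q ^ \<beta> i \<le> M" unfolding M_def by (rule member_le_sum) (use \<open>i \<in> I\<close> finI in auto)
        finally show "\<beta> i \<le> M" by simp
      qed
      have cntQ: "card {j\<in>J'. Q (\<gamma> j)} = card {i\<in>I'. Q (\<beta> i)}" for Q
        using card_by_levels[OF finI'(2) bdJ, of Q] card_by_levels[OF finI'(1) bdI, of Q] cnt by simp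
      have os: "card {j\<in>J'. even (\<gamma> j) = even p} + c = m"
        using hc cntQ[of "\<lambda>x. even x = even p"] unfolding I'_def by (simp add: conj_commute)
      have oo: "r + card {j\<in>J'. even (\<gamma> j) \<noteq> even p} = m"
        using hr cntQ[of "\<lambda>x. even x \<noteq> even p"] unfolding I'_def by (simp add: conj_commute)
      define cp where "cp = card {j\<in>J. \<gamma> j = p}"
      define al where "al = (\<Sum>j\<in>{j\<in>J. \<gamma> j < p}. q ^ \<gamma> j)"
      have aL_eq: "(\<Sum>j\<in>{j\<in>J. \<gamma> j < Suc p}. q ^ \<gamma> j) = al + cp * q ^ p"
      proof -
        have "(\<Sum>j\<in>{j\<in>J. \<gamma> j < Suc p}. q ^ \<gamma> j)
          = (\<Sum>j\<in>{j\<in>{j\<in>J. \<gamma> j < Suc p}. \<gamma> j < p}. q ^ \<gamma> j) + (\<Sum>j\<in>{j\<in>{j\<in>J. \<gamma> j < Suc p}. \<not> \<gamma> j < p}. q ^ \<gamma> j)"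
          by (rule sum_split_P) (use finJ in simp)
        also have "{j\<in>{j\<in>J. \<gamma> j < Suc p}. \<gamma> j < p} = {j\<in>J. \<gamma> j < p}" by auto
        also have "{j\<in>{j\<in>J. \<gamma> j < Suc p}. \<not> \<gamma> j < p} = {j\<in>J. \<gamma> j = p}" by auto
        also have "(\<Sum>j\<in>{j\<in>J. \<gamma> j = p}. q ^ \<gamma> j) = cp * q ^ p" unfolding cp_def by (rule sum_const_level)
        finally show ?thesis unfolding al_def .
      qed
      have alpha_eq: "\<alpha> = a + cp * q ^ p + al" using a_split aL_eq ab by simp
      define S1 where "S1 = {j\<in>J'. even (\<gamma> j) = even p}"
      define S2 where "S2 = {j\<in>J. \<gamma> j = p}"
      define S3 where "S3 = {j\<in>J. \<gamma> j < p \<and> even (\<gamma> j) = even p}"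
      have fS: "finite S1" "finite S2" "finite S3" using finJ unfolding S1_def S2_def S3_def J'_def by auto
      have "card (S1 \<union> S2 \<union> S3) = card S1 + card S2 + card S3"
        using fS by (simp add: card_Un_disjoint S1_def S2_def S3_def J'_def disjoint_iff)
      moreover have "card (S1 \<union> S2 \<union> S3) \<le> card {j\<in>J. even (\<gamma> j) = even p}"
        by (intro card_mono) (use finJ in \<open>auto simp: S1_def S2_def S3_def J'_def\<close>)
      ultimately have cS: "card S1 + cp + card S3 \<le> m" using sameJ unfolding cp_def S2_def by linarith
      have cS1: "card S1 + c = m" using os unfolding S1_def .
      show ?thesis
      proof (cases "cp < c")
        case True
        have "al < q ^ p" unfolding al_def by (rule low_lt[OF q2 finJ multg'])
        moreover have "(cp + 1) * q ^ p \<le> c * q ^ p" using True by (intro mult_le_mono1) simp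
        ultimately show ?thesis using alpha_eq unfolding RHS_def by simp
      next
        case False
        then have cpc: "cp = c" and "card S3 = 0" using cS cS1 by linarith+
        then have S3e: "S3 = {}" using fS by simp
        define T1 where "T1 = {j\<in>J'. even (\<gamma> j) \<noteq> even p}"
        define T2 where "T2 = {j\<in>J. \<gamma> j < p}"
        have fT: "finite T1" "finite T2" using finJ unfolding T1_def T2_def J'_def by auto
        have "card (T1 \<union> T2) = card T1 + card T2"
          using fT by (simp add: card_Un_disjoint T1_def T2_def J'_def disjoint_iff)
        moreover have "card (T1 \<union> T2) \<le> card {j\<in>J. even (\<gamma> j) \<noteq> even p}"
          by (intro card_mono) (use finJ S3e in \<open>auto simp: T1_def T2_def S3_def J'_def\<close>)
        ultimately have cT2: "card T2 \<le> r" using otherJ oo unfolding T1_def by linarith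
        have bnd: "\<forall>j\<in>{j\<in>J. \<gamma> j < p}. q ^ \<gamma> j \<le> q ^ (p - 1)"
        proof
          fix j assume "j \<in> {j\<in>J. \<gamma> j < p}"
          then have "\<gamma> j \<le> p - 1" by auto
          then show "q ^ \<gamma> j \<le> q ^ (p - 1)" using q2 by (intro power_increasing) auto
        qed
        have "al \<le> card T2 * q ^ (p - 1)"
          using sum_bounded_above[of "{j\<in>J. \<gamma> j < p}" "\<lambda>j. q ^ \<gamma> j" "q ^ (p - 1)"] bnd
          unfolding al_def T2_def by simp
        also have "\<dots> \<le> r * q ^ (p - 1)" using cT2 by (rule mult_le_mono1)
        finally show ?thesis using alpha_eq cpc unfolding RHS_def by simp
      qed
    qed
  qed
  then show ?thesis unfolding \<alpha>_def RHS_def a_def I'_def .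
qed



lemma ne_eq: assumes "ordered_with q \<beta> e" shows "num_even q \<beta> = e"
proof -
  have "{i \<in> {1..2*(q-1)}. even (\<beta> i)} = {1..e}"
  proof
    show "{i \<in> {1..2*(q-1)}. even (\<beta> i)} \<subseteq> {1..e}"
    proof
      fix i assume i: "i \<in> {i \<in> {1..2*(q-1)}. even (\<beta> i)}"
      show "i \<in> {1..e}"
      proof (rule ccontr)
        assume "i \<notin> {1..e}"
        then have "i \<in> {e+1..2*(q-1)}" using i by auto
        then have "odd (\<beta> i)" using assms unfolding ordered_with_def by blast
        then show False using i by auto
      qed
    qed
    show "{1..e} \<subseteq> {i \<in> {1..2*(q-1)}. even (\<beta> i)}"
      using assms unfolding ordered_with_def by auto
  qed
  then show ?thesis unfolding num_even_def by simp
qed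

lemma blocks: "q \<ge> 2 \<Longrightarrow> {1..2*(q-1)} = {1..q-1} \<union> {q..2*(q-1::nat)}" by auto

lemma norm2_full: assumes q: "q \<ge> 2" and o: "ordered_with q \<mu> (q - 1)" shows "norm2 q \<mu> = norm1 q \<mu>"
proof -
  have ne: "num_even q \<mu> = q - 1" by (rule ne_eq[OF o])
  have "norm2 q \<mu> = (\<Sum>i = 1..q-1. q ^ \<mu> i) + (\<Sum>i = q..2*(q-1). q ^ \<mu> i)"
    unfolding norm2_def Let_def ne using q by simp
  also have "\<dots> = (\<Sum>i \<in> {1..q-1} \<union> {q..2*(q-1)}. q ^ \<mu> i)"
    by (rule sum.union_disjoint[symmetric]) auto
  also have "\<dots> = norm1 q \<mu>" unfolding norm1_def using blocks[OF q] by simp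
  finally show ?thesis .
qed

lemma norm2_J:
  assumes q: "q \<ge> 2" and o: "ordered q \<gamma>"
  shows "\<exists>J. J \<subseteq> {1..2*(q-1)} \<and> norm2 q \<gamma> = (\<Sum>j\<in>J. q ^ \<gamma> j)
     \<and> card {j\<in>J. even (\<gamma> j)} \<le> q - 1 \<and> card {j\<in>J. odd (\<gamma> j)} \<le> q - 1"
proof -
  obtain e where oe: "ordered_with q \<gamma> e" using o unfolding ordered_def by blast
  have ne: "num_even q \<gamma> = e" by (rule ne_eq[OF oe])
  define B1 where "B1 = {1..min e (q-1)}"
  define B2 where "B2 = {max q (e+1)..2*(q-1)}"
  have disj: "B1 \<inter> B2 = {}" unfolding B1_def B2_def by auto
  have n2: "norm2 q \<gamma> = (\<Sum>j\<in>B1 \<union> B2. q ^ \<gamma> j)"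
    unfolding norm2_def Let_def ne B1_def B2_def
    by (rule sum.union_disjoint[symmetric]) auto
  have sub: "B1 \<union> B2 \<subseteq> {1..2*(q-1)}" unfolding B1_def B2_def by auto
  have ev: "{j\<in>B1 \<union> B2. even (\<gamma> j)} \<subseteq> B1"
  proof
    fix j assume j: "j \<in> {j\<in>B1 \<union> B2. even (\<gamma> j)}"
    show "j \<in> B1"
    proof (rule ccontr)
      assume "j \<notin> B1"
      then have "j \<in> {e+1..2*(q-1)}" using j unfolding B2_def by auto
      then have "odd (\<gamma> j)" using oe unfolding ordered_with_def by blast
      then show False using j by auto
    qed
  qed
  have od: "{j\<in>B1 \<union> B2. odd (\<gamma> j)} \<subseteq> B2"
  proof
    fix j assume j: "j \<in> {j\<in>B1 \<union> B2. odd (\<gamma> j)}"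
    show "j \<in> B2"
    proof (rule ccontr)
      assume "j \<notin> B2"
      then have "j \<in> {1..e}" using j unfolding B1_def by auto
      then have "even (\<gamma> j)" using oe unfolding ordered_with_def by blast
      then show False using j by auto
    qed
  qed
  have c1: "card {j\<in>B1 \<union> B2. even (\<gamma> j)} \<le> q - 1"
  proof -
    have "card {j\<in>B1 \<union> B2. even (\<gamma> j)} \<le> card B1" by (rule card_mono[OF _ ev]) (simp add: B1_def)
    also have "card B1 \<le> q - 1" unfolding B1_def by simp
    finally show ?thesis .
  qed
  have c2: "card {j\<in>B1 \<union> B2. odd (\<gamma> j)} \<le> q - 1"
  proof -
    have "card {j\<in>B1 \<union> B2. odd (\<gamma> j)} \<le> card B2" by (rule card_mono[OF _ od]) (simp add: B2_def)
    also have "card B2 \<le> q - 1" unfolding B2_def by simp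
    finally show ?thesis .
  qed
  show ?thesis using sub n2 c1 c2 by blast
qed

lemma part:
  fixes q p :: nat
  assumes q: "q \<ge> 2" and finI: "finite I" and cov: "I = A1 \<union> A2 \<union> A3"
    and d12: "A1 \<inter> A2 = {}" and d13: "A1 \<inter> A3 = {}" and d23: "A2 \<inter> A3 = {}"
    and A1: "A1 = {i\<in>I. p < \<beta> i}"
    and mu12: "\<forall>i\<in>A1 \<union> A2. \<mu> i = \<beta> i" and b2: "\<forall>i\<in>A2. \<beta> i = p"
    and mu3: "\<forall>i\<in>A3. \<mu> i = p - 1" and i0: "i0 \<in> A3" "\<beta> i0 = p"
    and cA3: "card A3 < q" and p1: "p \<ge> 1"
  shows "(\<Sum>i\<in>I. q ^ \<mu> i) = (\<Sum>i\<in>{i\<in>I. p < \<beta> i}. q ^ \<beta> i) + card A2 * q ^ p + card A3 * q ^ (p - 1)"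
    and "(\<Sum>i\<in>I. q ^ \<mu> i) \<le> (\<Sum>i\<in>I. q ^ \<beta> i)"
proof -
  have fin: "finite A1" "finite A2" "finite A3" using finI cov by auto
  have spl: "(\<Sum>i\<in>I. f i) = (\<Sum>i\<in>A1. f i) + (\<Sum>i\<in>A2. f i) + (\<Sum>i\<in>A3. f i)" for f :: "_ \<Rightarrow> nat"
  proof -
    have "(\<Sum>i\<in>I. f i) = (\<Sum>i\<in>A1 \<union> A2. f i) + (\<Sum>i\<in>A3. f i)"
      unfolding cov by (rule sum.union_disjoint) (use fin d13 d23 in auto)
    also have "(\<Sum>i\<in>A1 \<union> A2. f i) = (\<Sum>i\<in>A1. f i) + (\<Sum>i\<in>A2. f i)"
      by (rule sum.union_disjoint) (use fin d12 in auto)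
    finally show ?thesis .
  qed
  have s1: "(\<Sum>i\<in>A1. q ^ \<mu> i) = (\<Sum>i\<in>A1. q ^ \<beta> i)" using mu12 by (intro sum.cong) auto
  have s2: "(\<Sum>i\<in>A2. q ^ \<mu> i) = card A2 * q ^ p"
  proof -
    have "(\<Sum>i\<in>A2. q ^ \<mu> i) = (\<Sum>i\<in>A2. q ^ p)" using mu12 b2 by (intro sum.cong) auto
    then show ?thesis by simp
  qed
  have s2b: "(\<Sum>i\<in>A2. q ^ \<beta> i) = card A2 * q ^ p"
  proof -
    have "(\<Sum>i\<in>A2. q ^ \<beta> i) = (\<Sum>i\<in>A2. q ^ p)" using b2 by (intro sum.cong) auto
    then show ?thesis by simp
  qed
  have s3: "(\<Sum>i\<in>A3. q ^ \<mu> i) = card A3 * q ^ (p - 1)"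
  proof -
    have "(\<Sum>i\<in>A3. q ^ \<mu> i) = (\<Sum>i\<in>A3. q ^ (p - 1))" using mu3 by (intro sum.cong) auto
    then show ?thesis by simp
  qed
  show "(\<Sum>i\<in>I. q ^ \<mu> i) = (\<Sum>i\<in>{i\<in>I. p < \<beta> i}. q ^ \<beta> i) + card A2 * q ^ p + card A3 * q ^ (p - 1)"
    using spl[of "\<lambda>i. q ^ \<mu> i"] s1 s2 s3 A1 by simp
  have "q ^ p \<le> (\<Sum>i\<in>A3. q ^ \<beta> i)"
    using member_le_sum[of i0 A3 "\<lambda>i. q ^ \<beta> i"] i0 fin by simp
  moreover have "card A3 * q ^ (p - 1) \<le> (q - 1) * q ^ (p - 1)" using cA3 by (intro mult_le_mono1) simp
  moreover have "(q - 1) * q ^ (p - 1) \<le> q ^ p"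
  proof -
    have "q ^ p = q * q ^ (p - 1)" using p1 by (metis Suc_diff_1 less_le_trans zero_less_one power_Suc)
    then show ?thesis by simp
  qed
  ultimately show "(\<Sum>i\<in>I. q ^ \<mu> i) \<le> (\<Sum>i\<in>I. q ^ \<beta> i)"
    using spl[of "\<lambda>i. q ^ \<mu> i"] spl[of "\<lambda>i. q ^ \<beta> i"] s1 s2 s2b s3 by linarith
qed



lemma max_facts:
  fixes q n :: nat and \<beta> :: "nat \<Rightarrow> nat"
  assumes q: "q \<ge> 2" and hdvd: "(q - 1) dvd n" and hl: "digit_sum q n \<ge> 3 * (q - 1)"
    and hmax: "maximal1 q n \<beta>"
  shows "norm1 q \<beta> + (q - 1) \<le> n"
    and "\<forall>s. card {i\<in>{1..2*(q-1)}. \<beta> i = s} \<le> q - 1"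
    and "\<forall>i\<in>{1..2*(q-1)}. \<beta> i \<noteq> 0"
proof -
  define I where "I = {1..2*(q-1)}"
  define M where "M = norm1 q \<beta>"
  have finI: "finite I" unfolding I_def by simp
  have Mdef: "M = (\<Sum>i\<in>I. q ^ \<beta> i)" unfolding M_def norm1_def I_def by simp
  have Mn: "M \<le> n" using hmax unfolding maximal1_def inM2_def M_def by simp
  have maxb: "\<And>\<gamma>. norm1 q \<gamma> \<le> n \<Longrightarrow> norm1 q \<gamma> \<le> M"
    using hmax unfolding maximal1_def inM2_def M_def by simp
  have "M mod (q - 1) = card I mod (q - 1)" unfolding Mdef by (rule sum_pow_mod[OF q])
  also have "card I = 2 * (q - 1)" unfolding I_def by simp
  finally have dM: "(q - 1) dvd M" by (simp add: mod_eq_0_iff_dvd)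
  have "digit_sum q M \<le> card I" unfolding Mdef by (rule ds_sum[OF q finI])
  then have "M \<noteq> n" using hl q unfolding I_def by auto
  then have "M < n" using Mn by simp
  then show gap: "norm1 q \<beta> + (q - 1) \<le> n" using dvd_gap[OF hdvd dM] M_def by simp
  have contra: "False" if "norm1 q \<gamma> = M + (q - 1)" for \<gamma>
    using maxb[of \<gamma>] that gap q M_def by simp
  show "\<forall>s. card {i\<in>{1..2*(q-1)}. \<beta> i = s} \<le> q - 1"
  proof (rule ccontr)
    assume "\<not> ?thesis"
    then obtain s where "\<not> card {i\<in>{1..2*(q-1)}. \<beta> i = s} \<le> q - 1" by blast
    then have "q \<le> card {i\<in>I. \<beta> i = s}" unfolding I_def using q by simp
    then obtain Q where Q: "Q \<subseteq> {i\<in>I. \<beta> i = s}" "card Q = q" "finite Q"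
      by (rule obtain_subset_with_card_n)
    then have "Q \<noteq> {}" using q by auto
    then obtain i0 where i0: "i0 \<in> Q" by blast
    define \<gamma> where "\<gamma> = (\<lambda>i. if i = i0 then Suc s else if i \<in> Q then 0 else \<beta> i)"
    have QI: "Q \<subseteq> I" using Q by auto
    have "norm1 q \<gamma> = (\<Sum>i\<in>I. q ^ \<gamma> i)" unfolding norm1_def I_def by simp
    also have "\<dots> = (\<Sum>i\<in>I - Q. q ^ \<gamma> i) + (\<Sum>i\<in>Q. q ^ \<gamma> i)" by (rule sum.subset_diff[OF QI finI])
    also have "(\<Sum>i\<in>I - Q. q ^ \<gamma> i) = (\<Sum>i\<in>I - Q. q ^ \<beta> i)"
      by (intro sum.cong) (auto simp: \<gamma>_def i0)
    also have "(\<Sum>i\<in>Q. q ^ \<gamma> i) = q ^ \<gamma> i0 + (\<Sum>i\<in>Q - {i0}. q ^ \<gamma> i)" by (rule sum.remove[OF Q(3) i0])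
    also have "(\<Sum>i\<in>Q - {i0}. q ^ \<gamma> i) = (\<Sum>i\<in>Q - {i0}. 1)" by (intro sum.cong) (auto simp: \<gamma>_def)
    also have "(\<Sum>i\<in>Q - {i0}. (1::nat)) = q - 1" using Q i0 by simp
    finally have g: "norm1 q \<gamma> = (\<Sum>i\<in>I - Q. q ^ \<beta> i) + (q ^ Suc s + (q - 1))" by (simp add: \<gamma>_def)
    have "M = (\<Sum>i\<in>I - Q. q ^ \<beta> i) + (\<Sum>i\<in>Q. q ^ \<beta> i)" unfolding Mdef by (rule sum.subset_diff[OF QI finI])
    also have "(\<Sum>i\<in>Q. q ^ \<beta> i) = (\<Sum>i\<in>Q. q ^ s)" using Q by (intro sum.cong) auto
    also have "\<dots> = q ^ Suc s" using Q by simp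
    finally have "norm1 q \<gamma> = M + (q - 1)" using g by simp
    then show False by (rule contra)
  qed
  show "\<forall>i\<in>{1..2*(q-1)}. \<beta> i \<noteq> 0"
  proof (rule ccontr)
    assume "\<not> ?thesis"
    then obtain i0 where i0: "i0 \<in> I" "\<beta> i0 = 0" unfolding I_def by blast
    define \<gamma> where "\<gamma> = \<beta>(i0 := 1)"
    have "norm1 q \<gamma> = (\<Sum>i\<in>I. q ^ \<gamma> i)" unfolding norm1_def I_def by simp
    also have "\<dots> = q ^ \<gamma> i0 + (\<Sum>i\<in>I - {i0}. q ^ \<gamma> i)" by (rule sum.remove[OF finI i0(1)])
    also have "(\<Sum>i\<in>I - {i0}. q ^ \<gamma> i) = (\<Sum>i\<in>I - {i0}. q ^ \<beta> i)" by (intro sum.cong) (auto simp: \<gamma>_def)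
    finally have g0: "norm1 q \<gamma> = q ^ \<gamma> i0 + (\<Sum>i\<in>I - {i0}. q ^ \<beta> i)" .
    have "\<gamma> i0 = 1" by (simp add: \<gamma>_def)
    then have g: "norm1 q \<gamma> = q + (\<Sum>i\<in>I - {i0}. q ^ \<beta> i)" using g0 by simp
    have "M = q ^ \<beta> i0 + (\<Sum>i\<in>I - {i0}. q ^ \<beta> i)" unfolding Mdef by (rule sum.remove[OF finI i0(1)])
    then have "norm1 q \<gamma> = M + (q - 1)" using g i0 q by simp
    then show False by (rule contra)
  qed
qed

lemma assemble:
  fixes q n p :: nat and \<beta> \<mu> :: "nat \<Rightarrow> nat"
  assumes q: "q \<ge> 2" and Mn: "norm1 q \<beta> \<le> n"
    and maxb: "\<forall>\<gamma>. inM2 q n \<gamma> \<longrightarrow> norm1 q \<gamma> \<le> norm1 q \<beta>"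
    and mult: "\<forall>s. card {i\<in>{1..2*(q-1)}. \<beta> i = s} \<le> q - 1"
    and om: "ordered_with q \<mu> (q - 1)"
    and cov: "{1..2*(q-1)} = A1 \<union> A2 \<union> A3"
    and d12: "A1 \<inter> A2 = {}" and d13: "A1 \<inter> A3 = {}" and d23: "A2 \<inter> A3 = {}"
    and A1: "A1 = {i\<in>{1..2*(q-1)}. p < \<beta> i}"
    and mu12: "\<forall>i\<in>A1 \<union> A2. \<mu> i = \<beta> i" and b2: "\<forall>i\<in>A2. \<beta> i = p"
    and mu3: "\<forall>i\<in>A3. \<mu> i = p - 1" and i0: "i0 \<in> A3" "\<beta> i0 = p"
    and cA3: "card A3 < q" and p1: "p \<ge> 1"
    and hc: "card {i\<in>{1..2*(q-1)}. p < \<beta> i \<and> (even (\<beta> i) = even p)} + card A2 = q - 1"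
    and hr: "card A3 + card {i\<in>{1..2*(q-1)}. p < \<beta> i \<and> (even (\<beta> i) \<noteq> even p)} = q - 1"
  shows "inM2 q n \<mu> \<and> ordered q \<mu> \<and> maximal2 q n \<mu>"
proof -
  define I where "I = {1..2*(q-1)}"
  have finI: "finite I" unfolding I_def by simp
  have P1: "(\<Sum>i\<in>I. q ^ \<mu> i) = (\<Sum>i\<in>{i\<in>I. p < \<beta> i}. q ^ \<beta> i) + card A2 * q ^ p + card A3 * q ^ (p - 1)"
    and P2: "(\<Sum>i\<in>I. q ^ \<mu> i) \<le> (\<Sum>i\<in>I. q ^ \<beta> i)"
    using part[OF q finI cov[folded I_def] d12 d13 d23 A1[folded I_def] mu12 b2 mu3 i0 cA3 p1] by auto
  have n1mu: "norm1 q \<mu> = (\<Sum>i\<in>I. q ^ \<mu> i)" unfolding norm1_def I_def by simp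
  have n1b: "norm1 q \<beta> = (\<Sum>i\<in>I. q ^ \<beta> i)" unfolding norm1_def I_def by simp
  have inmu: "inM2 q n \<mu>" unfolding inM2_def using P2 n1mu n1b Mn by simp
  have ordmu: "ordered q \<mu>" unfolding ordered_def using om by blast
  have n2mu: "norm2 q \<mu> = norm1 q \<mu>" by (rule norm2_full[OF q om])
  have "\<forall>\<gamma>. ordered q \<gamma> \<and> inM2 q n \<gamma> \<longrightarrow> norm2 q \<gamma> \<le> norm2 q \<mu>"
  proof (intro allI impI)
    fix \<gamma> assume g: "ordered q \<gamma> \<and> inM2 q n \<gamma>"
    obtain J where J: "J \<subseteq> I" "norm2 q \<gamma> = (\<Sum>j\<in>J. q ^ \<gamma> j)"
      "card {j\<in>J. even (\<gamma> j)} \<le> q - 1" "card {j\<in>J. odd (\<gamma> j)} \<le> q - 1"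
      using norm2_J[OF q] g unfolding I_def by blast
    have finJ: "finite J" using J(1) finI finite_subset by blast
    have "(\<Sum>j\<in>J. q ^ \<gamma> j) \<le> (\<Sum>i\<in>I. q ^ \<gamma> i)" by (rule sum_mono2[OF finI J(1)]) simp
    also have "\<dots> = norm1 q \<gamma>" unfolding norm1_def I_def by simp
    also have "\<dots> \<le> norm1 q \<beta>" using maxb g by blast
    finally have le: "(\<Sum>j\<in>J. q ^ \<gamma> j) \<le> (\<Sum>i\<in>I. q ^ \<beta> i)" using n1b by simp
    have "(\<Sum>j\<in>J. q ^ \<gamma> j) \<le> (\<Sum>i\<in>{i\<in>I. p < \<beta> i}. q ^ \<beta> i) + card A2 * q ^ p + card A3 * q ^ (p - 1)"
      by (rule key[where m = "q - 1"]) (use q finI finJ mult J le p1 hc hr in \<open>simp_all add: I_def\<close>)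
    then show "norm2 q \<gamma> \<le> norm2 q \<mu>" using J(2) P1 n1mu n2mu by simp
  qed
  then show ?thesis unfolding maximal2_def using inmu ordmu by blast
qed



lemma card_split2: "finite U \<Longrightarrow> X \<union> Y = U \<Longrightarrow> X \<inter> Y = {} \<Longrightarrow> card X + card Y = card U"
  by (metis card_Un_disjoint finite_Un)

lemma norm2_le: assumes q: "q \<ge> 2" and o: "ordered q \<gamma>" shows "norm2 q \<gamma> \<le> norm1 q \<gamma>"
proof -
  obtain J where J: "J \<subseteq> {1..2*(q-1)}" "norm2 q \<gamma> = (\<Sum>j\<in>J. q ^ \<gamma> j)"
    using norm2_J[OF q o] by blast
  have "(\<Sum>j\<in>J. q ^ \<gamma> j) \<le> (\<Sum>i\<in>{1..2*(q-1)}. q ^ \<gamma> i)" by (rule sum_mono2[OF _ J(1)]) simp_all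
  then show ?thesis using J(2) unfolding norm1_def by simp
qed

theorem propositionA2:
  fixes q n e :: nat and \<beta> :: "nat \<Rightarrow> nat"
  assumes hq: "q \<ge> 2"
    and hn: "n > 0"
    and hdvd: "(q - 1) dvd n"
    and hl: "digit_sum q n \<ge> 3 * (q - 1)"
    and hord: "ordered q \<beta>"
    and hmax: "maximal1 q n \<beta>"
    and he: "e = num_even q \<beta>"
  shows "(e = q - 1 \<longrightarrow> norm1 q \<beta> = norm2 q \<beta> \<and> maximal2 q n \<beta>)
    \<and> (e < q - 1 \<longrightarrow>
         (let \<mu> = (\<lambda>j. if 1 \<le> j \<and> j \<le> q - 1 \<and> \<beta> j \<le> \<beta> (q - 1) then \<beta> (q - 1) - 1 else \<beta> j)
          in inM2 q n \<mu> \<and> ordered q \<mu> \<and> maximal2 q n \<mu>))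
    \<and> (q - 1 < e \<longrightarrow>
         (let \<mu> = (\<lambda>j. if q \<le> j \<and> j \<le> 2 * (q - 1) \<and> \<beta> j \<le> \<beta> q then \<beta> q - 1 else \<beta> j)
          in inM2 q n \<mu> \<and> ordered q \<mu> \<and> maximal2 q n \<mu>))"
proof -
  obtain e0 where oe0: "ordered_with q \<beta> e0" using hord unfolding ordered_def by blast
  have "e0 = e" using ne_eq[OF oe0] he by simp
  with oe0 have oe: "ordered_with q \<beta> e" by simp
  have o1: "e \<le> 2*(q-1)" and o2: "\<forall>i\<in>{1..e}. even (\<beta> i)"
    and o3: "\<forall>i j. 1 \<le> i \<and> i \<le> j \<and> j \<le> e \<longrightarrow> \<beta> j \<le> \<beta> i"
    and o4: "\<forall>i\<in>{e+1..2*(q-1)}. odd (\<beta> i)"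
    and o5: "\<forall>i j. e+1 \<le> i \<and> i \<le> j \<and> j \<le> 2*(q-1) \<longrightarrow> \<beta> i \<le> \<beta> j"
    using oe unfolding ordered_with_def by blast+
  have Mn: "norm1 q \<beta> \<le> n" and maxb: "\<forall>\<gamma>. inM2 q n \<gamma> \<longrightarrow> norm1 q \<gamma> \<le> norm1 q \<beta>"
    using hmax unfolding maximal1_def inM2_def by auto
  have mult: "\<forall>s. card {i\<in>{1..2*(q-1)}. \<beta> i = s} \<le> q - 1"
    and nz: "\<forall>i\<in>{1..2*(q-1)}. \<beta> i \<noteq> 0"
    using max_facts[OF hq hdvd hl hmax] by blast+
  have P1: "e = q - 1 \<longrightarrow> norm1 q \<beta> = norm2 q \<beta> \<and> maximal2 q n \<beta>"
  proof
    assume e: "e = q - 1"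
    have n2: "norm2 q \<beta> = norm1 q \<beta>" using norm2_full[OF hq] oe e by simp
    have "\<forall>\<gamma>. ordered q \<gamma> \<and> inM2 q n \<gamma> \<longrightarrow> norm2 q \<gamma> \<le> norm2 q \<beta>"
    proof (intro allI impI)
      fix \<gamma> assume g: "ordered q \<gamma> \<and> inM2 q n \<gamma>"
      have "norm2 q \<gamma> \<le> norm1 q \<gamma>" using norm2_le[OF hq] g by blast
      also have "\<dots> \<le> norm1 q \<beta>" using maxb g by blast
      finally show "norm2 q \<gamma> \<le> norm2 q \<beta>" using n2 by simp
    qed
    then show "norm1 q \<beta> = norm2 q \<beta> \<and> maximal2 q n \<beta>"
      unfolding maximal2_def using n2 hord Mn by (simp add: inM2_def)
  qed
  have P2: "e < q - 1 \<longrightarrow>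
         (let \<mu> = (\<lambda>j. if 1 \<le> j \<and> j \<le> q - 1 \<and> \<beta> j \<le> \<beta> (q - 1) then \<beta> (q - 1) - 1 else \<beta> j)
          in inM2 q n \<mu> \<and> ordered q \<mu> \<and> maximal2 q n \<mu>)"
  proof
    assume e: "e < q - 1"
    define p where "p = \<beta> (q - 1)"
    define \<mu> where "\<mu> = (\<lambda>j. if 1 \<le> j \<and> j \<le> q - 1 \<and> \<beta> j \<le> \<beta> (q - 1) then \<beta> (q - 1) - 1 else \<beta> j)"
    define I where "I = {1..2*(q-1)}"
    define A1 where "A1 = {i\<in>I. p < \<beta> i}"
    define A2 where "A2 = {i\<in>{q..2*(q-1)}. \<beta> i = p}"
    define A3 where "A3 = {i\<in>{1..q-1}. \<beta> i \<le> p}"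
    have podd: "odd p" unfolding p_def using o4 e hq by auto
    then have p1: "p \<ge> 1" by (cases p) auto
    have hi: "q \<le> i \<and> i \<le> 2*(q-1) \<Longrightarrow> p \<le> \<beta> i \<and> odd (\<beta> i)" for i
      using o5[rule_format, of "q-1" i] o4 e unfolding p_def by auto
    have lo_odd: "e+1 \<le> i \<and> i \<le> q-1 \<Longrightarrow> \<beta> i \<le> p" for i
      using o5[rule_format, of i "q-1"] hq unfolding p_def by auto
    have ev_le: "i \<in> I \<Longrightarrow> even (\<beta> i) \<Longrightarrow> i \<le> e" for i
    proof (rule ccontr)
      assume "i \<in> I" "even (\<beta> i)" "\<not> i \<le> e"
      then have "i \<in> {e+1..2*(q-1)}" unfolding I_def by auto
      then show False using o4 \<open>even (\<beta> i)\<close> by blast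
    qed
    have gt_ev: "1 \<le> i \<and> i \<le> q-1 \<Longrightarrow> p < \<beta> i \<Longrightarrow> i \<le> e" for i
    proof (rule ccontr)
      assume "1 \<le> i \<and> i \<le> q-1" "p < \<beta> i" "\<not> i \<le> e"
      then have "\<beta> i \<le> p" using lo_odd[of i] by simp
      then show False using \<open>p < \<beta> i\<close> by simp
    qed
    have om: "ordered_with q \<mu> (q - 1)"
      unfolding ordered_with_def
    proof (intro conjI ballI allI impI)
      show "q - 1 \<le> 2 * (q - 1)" by simp
    next
      fix i assume i: "i \<in> {1..q-1}"
      show "even (\<mu> i)"
      proof (cases "\<beta> i \<le> p")
        case True
        then show ?thesis using i podd unfolding \<mu>_def p_def by auto
      next
        case False
        then have "i \<le> e" using gt_ev[of i] i by auto
        then show ?thesis using False i o2 unfolding \<mu>_def p_def by auto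
      qed
    next
      fix i j assume ij: "1 \<le> i \<and> i \<le> j \<and> j \<le> q - 1"
      show "\<mu> j \<le> \<mu> i"
      proof (cases "\<beta> j \<le> p")
        case True
        then show ?thesis using ij unfolding \<mu>_def p_def by auto
      next
        case False
        then have "j \<le> e" using gt_ev[of j] ij by auto
        then have "\<beta> j \<le> \<beta> i" using o3 ij by blast
        then show ?thesis using False ij unfolding \<mu>_def p_def by auto
      qed
    next
      fix i assume i: "i \<in> {q - 1 + 1..2 * (q - 1)}"
      then show "odd (\<mu> i)" using hi[of i] hq unfolding \<mu>_def by auto
    next
      fix i j assume ij: "q - 1 + 1 \<le> i \<and> i \<le> j \<and> j \<le> 2 * (q - 1)"
      then show "\<mu> i \<le> \<mu> j" using o5 e hq unfolding \<mu>_def by auto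
    qed
    have cov: "{1..2*(q-1)} = A1 \<union> A2 \<union> A3"
    proof
      show "{1..2*(q-1)} \<subseteq> A1 \<union> A2 \<union> A3"
      proof
        fix i assume i: "i \<in> {1..2*(q-1)}"
        show "i \<in> A1 \<union> A2 \<union> A3"
        proof (cases "p < \<beta> i")
          case True then show ?thesis using i unfolding A1_def I_def by auto
        next
          case False
          show ?thesis
          proof (cases "i \<le> q - 1")
            case True then show ?thesis using i False unfolding A3_def by auto
          next
            case c2: False
            then have "p \<le> \<beta> i" using hi[of i] i by auto
            then show ?thesis using i False c2 unfolding A2_def by auto
          qed
        qed
      qed
      show "A1 \<union> A2 \<union> A3 \<subseteq> {1..2*(q-1)}" unfolding A1_def A2_def A3_def I_def using hq by auto
    qed
    have d12: "A1 \<inter> A2 = {}" and d13: "A1 \<inter> A3 = {}" and d23: "A2 \<inter> A3 = {}"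
      unfolding A1_def A2_def A3_def by auto
    have mu12: "\<forall>i\<in>A1 \<union> A2. \<mu> i = \<beta> i" unfolding A1_def A2_def \<mu>_def p_def by auto
    have b2: "\<forall>i\<in>A2. \<beta> i = p" unfolding A2_def by auto
    have mu3: "\<forall>i\<in>A3. \<mu> i = p - 1" unfolding A3_def \<mu>_def p_def by auto
    have i0: "q - 1 \<in> A3" "\<beta> (q - 1) = p" unfolding A3_def p_def using hq by auto
    have cA3: "card A3 < q"
    proof -
      have "card A3 \<le> card {1..q-1}" unfolding A3_def by (rule card_mono) auto
      then show ?thesis using hq by simp
    qed
    have hc: "card {i\<in>{1..2*(q-1)}. p < \<beta> i \<and> (even (\<beta> i) = even p)} + card A2 = q - 1"
    proof -
      have "card {i\<in>{1..2*(q-1)}. p < \<beta> i \<and> (even (\<beta> i) = even p)} + card A2 = card {q..2*(q-1)}"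
      proof (rule card_split2)
        show "{i\<in>{1..2*(q-1)}. p < \<beta> i \<and> (even (\<beta> i) = even p)} \<union> A2 = {q..2*(q-1)}"
        proof
          show "{i\<in>{1..2*(q-1)}. p < \<beta> i \<and> (even (\<beta> i) = even p)} \<union> A2 \<subseteq> {q..2*(q-1)}"
          proof
            fix i assume i: "i \<in> {i\<in>{1..2*(q-1)}. p < \<beta> i \<and> (even (\<beta> i) = even p)} \<union> A2"
            show "i \<in> {q..2*(q-1)}"
            proof (cases "i \<in> A2")
              case True then show ?thesis unfolding A2_def by auto
            next
              case False
              then have i': "i \<in> {1..2*(q-1)}" "p < \<beta> i" "odd (\<beta> i)" using i podd by auto
              have "\<not> i \<le> e" using i' o2 by auto
              then have "\<not> i \<le> q - 1" using lo_odd[of i] i' by auto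
              then show ?thesis using i' by auto
            qed
          qed
          show "{q..2*(q-1)} \<subseteq> {i\<in>{1..2*(q-1)}. p < \<beta> i \<and> (even (\<beta> i) = even p)} \<union> A2"
          proof
            fix i assume i: "i \<in> {q..2*(q-1)}"
            then have "p \<le> \<beta> i \<and> odd (\<beta> i)" using hi by auto
            then show "i \<in> {i\<in>{1..2*(q-1)}. p < \<beta> i \<and> (even (\<beta> i) = even p)} \<union> A2"
              using i podd hq unfolding A2_def by auto
          qed
        qed
      qed (auto simp: A2_def)
      then show ?thesis using hq by simp
    qed
    have hr: "card A3 + card {i\<in>{1..2*(q-1)}. p < \<beta> i \<and> (even (\<beta> i) \<noteq> even p)} = q - 1"
    proof -
      have "card {i\<in>{1..2*(q-1)}. p < \<beta> i \<and> (even (\<beta> i) \<noteq> even p)} + card A3 = card {1..q-1}"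
      proof (rule card_split2)
        show "{i\<in>{1..2*(q-1)}. p < \<beta> i \<and> (even (\<beta> i) \<noteq> even p)} \<union> A3 = {1..q-1}"
        proof
          show "{i\<in>{1..2*(q-1)}. p < \<beta> i \<and> (even (\<beta> i) \<noteq> even p)} \<union> A3 \<subseteq> {1..q-1}"
          proof
            fix i assume i: "i \<in> {i\<in>{1..2*(q-1)}. p < \<beta> i \<and> (even (\<beta> i) \<noteq> even p)} \<union> A3"
            show "i \<in> {1..q-1}"
            proof (cases "i \<in> A3")
              case True then show ?thesis unfolding A3_def by auto
            next
              case False
              then have i': "i \<in> I" "even (\<beta> i)" using i podd unfolding I_def by auto
              then show ?thesis using ev_le[OF i'] e i' unfolding I_def by auto
            qed
          qed
          show "{1..q-1} \<subseteq> {i\<in>{1..2*(q-1)}. p < \<beta> i \<and> (even (\<beta> i) \<noteq> even p)} \<union> A3"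
          proof
            fix i assume i: "i \<in> {1..q-1}"
            show "i \<in> {i\<in>{1..2*(q-1)}. p < \<beta> i \<and> (even (\<beta> i) \<noteq> even p)} \<union> A3"
            proof (cases "\<beta> i \<le> p")
              case True then show ?thesis using i unfolding A3_def by auto
            next
              case False
              then have "i \<le> e" using gt_ev[of i] i by auto
              then have "even (\<beta> i)" using o2 i by auto
              then show ?thesis using False i podd by auto
            qed
          qed
        qed
      qed (auto simp: A3_def)
      then show ?thesis using hq by simp
    qed
    have R: "inM2 q n \<mu> \<and> ordered q \<mu> \<and> maximal2 q n \<mu>"
      by (rule assemble[OF hq Mn maxb mult om cov d12 d13 d23 _ mu12 b2 mu3 i0 cA3 p1 hc hr])
         (simp add: A1_def I_def)
    show "let \<mu> = (\<lambda>j. if 1 \<le> j \<and> j \<le> q - 1 \<and> \<beta> j \<le> \<beta> (q - 1) then \<beta> (q - 1) - 1 else \<beta> j)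
          in inM2 q n \<mu> \<and> ordered q \<mu> \<and> maximal2 q n \<mu>"
      unfolding Let_def using R unfolding \<mu>_def .
  qed
  have P3: "q - 1 < e \<longrightarrow>
         (let \<mu> = (\<lambda>j. if q \<le> j \<and> j \<le> 2 * (q - 1) \<and> \<beta> j \<le> \<beta> q then \<beta> q - 1 else \<beta> j)
          in inM2 q n \<mu> \<and> ordered q \<mu> \<and> maximal2 q n \<mu>)"
  proof
    assume e: "q - 1 < e"
    define p where "p = \<beta> q"
    define \<mu> where "\<mu> = (\<lambda>j. if q \<le> j \<and> j \<le> 2 * (q - 1) \<and> \<beta> j \<le> \<beta> q then \<beta> q - 1 else \<beta> j)"
    define I where "I = {1..2*(q-1)}"
    define A1 where "A1 = {i\<in>I. p < \<beta> i}"
    define A2 where "A2 = {i\<in>{1..q-1}. \<beta> i = p}"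
    define A3 where "A3 = {i\<in>{q..2*(q-1)}. \<beta> i \<le> p}"
    have qe: "q \<le> e" using e by simp
    have pev: "even p" unfolding p_def using o2 qe hq by auto
    have "p \<noteq> 0" unfolding p_def using nz hq qe o1 by auto
    then have p1: "p \<ge> 1" by simp
    have hi: "1 \<le> i \<and> i \<le> q-1 \<Longrightarrow> p \<le> \<beta> i \<and> even (\<beta> i)" for i
      using o3[rule_format, of i q] o2 qe unfolding p_def by auto
    have lo_even: "q \<le> i \<and> i \<le> e \<Longrightarrow> \<beta> i \<le> p" for i
      using o3[rule_format, of q i] hq unfolding p_def by auto
    have od_gt: "i \<in> I \<Longrightarrow> odd (\<beta> i) \<Longrightarrow> e < i" for i
    proof (rule ccontr)
      assume "i \<in> I" "odd (\<beta> i)" "\<not> e < i"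
      then have "i \<in> {1..e}" unfolding I_def by auto
      then show False using o2 \<open>odd (\<beta> i)\<close> by blast
    qed
    have gt_od: "q \<le> i \<Longrightarrow> p < \<beta> i \<Longrightarrow> e < i" for i
    proof (rule ccontr)
      assume "q \<le> i" "p < \<beta> i" "\<not> e < i"
      then have "\<beta> i \<le> p" using lo_even[of i] by simp
      then show False using \<open>p < \<beta> i\<close> by simp
    qed
    have om: "ordered_with q \<mu> (q - 1)"
      unfolding ordered_with_def
    proof (intro conjI ballI allI impI)
      show "q - 1 \<le> 2 * (q - 1)" by simp
    next
      fix i assume i: "i \<in> {1..q-1}"
      then show "even (\<mu> i)" using hi[of i] unfolding \<mu>_def by auto
    next
      fix i j assume ij: "1 \<le> i \<and> i \<le> j \<and> j \<le> q - 1"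
      then have "\<beta> j \<le> \<beta> i" using o3 qe by auto
      then show "\<mu> j \<le> \<mu> i" using ij unfolding \<mu>_def by auto
    next
      fix i assume i: "i \<in> {q - 1 + 1..2 * (q - 1)}"
      show "odd (\<mu> i)"
      proof (cases "\<beta> i \<le> p")
        case True
        then show ?thesis using i pev p1 hq unfolding \<mu>_def p_def by auto
      next
        case False
        then have "e < i" using gt_od[of i] i hq by auto
        then have "odd (\<beta> i)" using o4 i by auto
        then show ?thesis using False unfolding \<mu>_def p_def by auto
      qed
    next
      fix i j assume ij: "q - 1 + 1 \<le> i \<and> i \<le> j \<and> j \<le> 2 * (q - 1)"
      show "\<mu> i \<le> \<mu> j"
      proof (cases "\<beta> i \<le> p")
        case True
        then show ?thesis using ij hq unfolding \<mu>_def p_def by auto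
      next
        case False
        then have "e < i" using gt_od[of i] ij hq by auto
        then have "\<beta> i \<le> \<beta> j" using o5 ij by auto
        then show ?thesis using False ij unfolding \<mu>_def p_def by auto
      qed
    qed
    have cov: "{1..2*(q-1)} = A1 \<union> A2 \<union> A3"
    proof
      show "{1..2*(q-1)} \<subseteq> A1 \<union> A2 \<union> A3"
      proof
        fix i assume i: "i \<in> {1..2*(q-1)}"
        show "i \<in> A1 \<union> A2 \<union> A3"
        proof (cases "p < \<beta> i")
          case True then show ?thesis using i unfolding A1_def I_def by auto
        next
          case False
          show ?thesis
          proof (cases "q \<le> i")
            case True then show ?thesis using i False unfolding A3_def by auto
          next
            case c2: False
            then have "p \<le> \<beta> i" using hi[of i] i by auto
            then show ?thesis using i False c2 unfolding A2_def by auto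
          qed
        qed
      qed
      show "A1 \<union> A2 \<union> A3 \<subseteq> {1..2*(q-1)}" unfolding A1_def A2_def A3_def I_def using hq by auto
    qed
    have d12: "A1 \<inter> A2 = {}" and d13: "A1 \<inter> A3 = {}" and d23: "A2 \<inter> A3 = {}"
      unfolding A1_def A2_def A3_def by auto
    have mu12: "\<forall>i\<in>A1 \<union> A2. \<mu> i = \<beta> i" unfolding A1_def A2_def \<mu>_def p_def by auto
    have b2: "\<forall>i\<in>A2. \<beta> i = p" unfolding A2_def by auto
    have mu3: "\<forall>i\<in>A3. \<mu> i = p - 1" unfolding A3_def \<mu>_def p_def by auto
    have i0: "q \<in> A3" "\<beta> q = p" unfolding A3_def p_def using hq by auto
    have cA3: "card A3 < q"
    proof -
      have "card A3 \<le> card {q..2*(q-1)}" unfolding A3_def by (rule card_mono) auto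
      then show ?thesis using hq by simp
    qed
    have hc: "card {i\<in>{1..2*(q-1)}. p < \<beta> i \<and> (even (\<beta> i) = even p)} + card A2 = q - 1"
    proof -
      have "card {i\<in>{1..2*(q-1)}. p < \<beta> i \<and> (even (\<beta> i) = even p)} + card A2 = card {1..q-1}"
      proof (rule card_split2)
        show "{i\<in>{1..2*(q-1)}. p < \<beta> i \<and> (even (\<beta> i) = even p)} \<union> A2 = {1..q-1}"
        proof
          show "{i\<in>{1..2*(q-1)}. p < \<beta> i \<and> (even (\<beta> i) = even p)} \<union> A2 \<subseteq> {1..q-1}"
          proof
            fix i assume i: "i \<in> {i\<in>{1..2*(q-1)}. p < \<beta> i \<and> (even (\<beta> i) = even p)} \<union> A2"
            show "i \<in> {1..q-1}"
            proof (cases "i \<in> A2")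
              case True then show ?thesis unfolding A2_def by auto
            next
              case False
              then have i': "i \<in> {1..2*(q-1)}" "p < \<beta> i" "even (\<beta> i)" using i pev by auto
              have "\<not> e < i" using i' o4 by auto
              then have "\<not> q \<le> i" using lo_even[of i] i' by auto
              then show ?thesis using i' by auto
            qed
          qed
          show "{1..q-1} \<subseteq> {i\<in>{1..2*(q-1)}. p < \<beta> i \<and> (even (\<beta> i) = even p)} \<union> A2"
          proof
            fix i assume i: "i \<in> {1..q-1}"
            then have "p \<le> \<beta> i \<and> even (\<beta> i)" using hi by auto
            then show "i \<in> {i\<in>{1..2*(q-1)}. p < \<beta> i \<and> (even (\<beta> i) = even p)} \<union> A2"
              using i pev hq unfolding A2_def by auto
          qed
        qed
      qed (auto simp: A2_def)
      then show ?thesis using hq by simp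
    qed
    have hr: "card A3 + card {i\<in>{1..2*(q-1)}. p < \<beta> i \<and> (even (\<beta> i) \<noteq> even p)} = q - 1"
    proof -
      have "card {i\<in>{1..2*(q-1)}. p < \<beta> i \<and> (even (\<beta> i) \<noteq> even p)} + card A3 = card {q..2*(q-1)}"
      proof (rule card_split2)
        show "{i\<in>{1..2*(q-1)}. p < \<beta> i \<and> (even (\<beta> i) \<noteq> even p)} \<union> A3 = {q..2*(q-1)}"
        proof
          show "{i\<in>{1..2*(q-1)}. p < \<beta> i \<and> (even (\<beta> i) \<noteq> even p)} \<union> A3 \<subseteq> {q..2*(q-1)}"
          proof
            fix i assume i: "i \<in> {i\<in>{1..2*(q-1)}. p < \<beta> i \<and> (even (\<beta> i) \<noteq> even p)} \<union> A3"
            show "i \<in> {q..2*(q-1)}"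
            proof (cases "i \<in> A3")
              case True then show ?thesis unfolding A3_def by auto
            next
              case False
              then have i': "i \<in> I" "odd (\<beta> i)" using i pev unfolding I_def by auto
              then show ?thesis using od_gt[OF i'] qe i' unfolding I_def by auto
            qed
          qed
          show "{q..2*(q-1)} \<subseteq> {i\<in>{1..2*(q-1)}. p < \<beta> i \<and> (even (\<beta> i) \<noteq> even p)} \<union> A3"
          proof
            fix i assume i: "i \<in> {q..2*(q-1)}"
            show "i \<in> {i\<in>{1..2*(q-1)}. p < \<beta> i \<and> (even (\<beta> i) \<noteq> even p)} \<union> A3"
            proof (cases "\<beta> i \<le> p")
              case True then show ?thesis using i unfolding A3_def by auto
            next
              case False
              then have "e < i" using gt_od[of i] i by auto
              then have "odd (\<beta> i)" using o4 i by auto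
              then show ?thesis using False i pev hq by auto
            qed
          qed
        qed
      qed (auto simp: A3_def)
      then show ?thesis using hq by simp
    qed
    have R: "inM2 q n \<mu> \<and> ordered q \<mu> \<and> maximal2 q n \<mu>"
      by (rule assemble[OF hq Mn maxb mult om cov d12 d13 d23 _ mu12 b2 mu3 i0 cA3 p1 hc hr])
         (simp add: A1_def I_def)
    show "let \<mu> = (\<lambda>j. if q \<le> j \<and> j \<le> 2 * (q - 1) \<and> \<beta> j \<le> \<beta> q then \<beta> q - 1 else \<beta> j)
          in inM2 q n \<mu> \<and> ordered q \<mu> \<and> maximal2 q n \<mu>"
      unfolding Let_def using R unfolding \<mu>_def .
  qed
  show ?thesis using P1 P2 P3 by blast
qed


end
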